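(* $t(K(10,4))=\frac{3}{2}$. Moreover, if $S$ is a vertex cut of $K(10,4)$ such that $\frac{|S|}{c(K(10,4)\setminus S)} = \frac{3}{2}$, then $S$ is the complement of a maximum independent set of $K(10,4)$.
   Context: The Kneser graph $K(n,k)$ has as vertices the $k$-element subsets of $[n]=\{1,\dots,n\}$, two vertices being adjacent iff they are disjoint. A vertex cut is a set $S$ of vertices whose removal disconnects the graph; $c(G\setminus S)$ is the number of connected components after deleting $S$; the toughness is $t(G)=\min_S |S|/c(G\setminus S)$ over vertex cuts $S$. *)

theory Defs
  imports Complex_Main
begin

definition kneser_vertices :: "nat \<Rightarrow> nat \<Rightarrow> nat set set" where
  "kneser_vertices n k = {A. A \<subseteq> {1..n} \<and> card A = k}"

definition kneser_adj :: "nat set \<Rightarrow> nat set \<Rightarrow> bool" where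
  "kneser_adj A B \<longleftrightarrow> A \<inter> B = {}"

definition reach_in :: "('a \<Rightarrow> 'a \<Rightarrow> bool) \<Rightarrow> 'a set \<Rightarrow> 'a \<Rightarrow> 'a \<Rightarrow> bool" where
  "reach_in E W = (\<lambda>x y. x \<in> W \<and> y \<in> W \<and> E x y)\<^sup>*\<^sup>*"

definition components_in :: "('a \<Rightarrow> 'a \<Rightarrow> bool) \<Rightarrow> 'a set \<Rightarrow> 'a set set" where
  "components_in E W = (\<lambda>x. {y \<in> W. reach_in E W x y}) ` W"

definition num_components :: "('a \<Rightarrow> 'a \<Rightarrow> bool) \<Rightarrow> 'a set \<Rightarrow> nat" where
  "num_components E W = card (components_in E W)"

definition vertex_cut :: "'a set \<Rightarrow> ('a \<Rightarrow> 'a \<Rightarrow> bool) \<Rightarrow> 'a set \<Rightarrow> bool" where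
  "vertex_cut V E S \<longleftrightarrow> S \<subseteq> V \<and> num_components E (V - S) \<ge> 2"

definition toughness :: "'a set \<Rightarrow> ('a \<Rightarrow> 'a \<Rightarrow> bool) \<Rightarrow> real" where
  "toughness V E = Min {real (card S) / real (num_components E (V - S)) | S. vertex_cut V E S}"

definition independent_set :: "'a set \<Rightarrow> ('a \<Rightarrow> 'a \<Rightarrow> bool) \<Rightarrow> 'a set \<Rightarrow> bool" where
  "independent_set V E I \<longleftrightarrow> I \<subseteq> V \<and> (\<forall>x\<in>I. \<forall>y\<in>I. \<not> E x y)"

definition maximum_independent_set :: "'a set \<Rightarrow> ('a \<Rightarrow> 'a \<Rightarrow> bool) \<Rightarrow> 'a set \<Rightarrow> bool" where
  "maximum_independent_set V E I \<longleftrightarrow> independent_set V E I \<and>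
     (\<forall>J. independent_set V E J \<longrightarrow> card J \<le> card I)"

end

theory Submission
  imports Defs "HOL-Combinatorics.Permutations"
begin


abbreviation KV where "KV \<equiv> kneser_vertices 10 4"

definition DD :: "(nat set \<times> nat set) set" where
  "DD = {(A,B). A \<in> KV \<and> B \<in> KV \<and> A \<inter> B = {}}"
definition Perms :: "(nat \<Rightarrow> nat) set" where
  "Perms = {p. p permutes {1..10::nat}}"

lemma KV_iff: "A \<in> KV \<longleftrightarrow> A \<subseteq> {1..10} \<and> card A = 4"
  by (simp add: kneser_vertices_def)

lemma finite_KV: "finite KV"
proof -
  have "KV \<subseteq> Pow {1..10}" unfolding kneser_vertices_def by blast
  then show ?thesis by (rule finite_subset) simp
qed

lemma finite_DD: "finite DD"
proof -
  have "DD \<subseteq> KV \<times> KV" by (auto simp: DD_def)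
  then show ?thesis using finite_KV by (meson finite_SigmaI finite_subset)
qed

lemma finite_Perms: "finite Perms"
  unfolding Perms_def by (rule finite_permutations) simp

lemma card_Perms: "card Perms = fact 10"
  unfolding Perms_def by (rule card_permutations) simp_all

lemma perm_KV:
  assumes p: "p \<in> Perms" and A: "A \<in> KV" shows "p ` A \<in> KV"
proof -
  have pp: "p permutes {1..10}" using p by (simp add: Perms_def)
  have "p ` A \<subseteq> p ` {1..10}" using A by (auto simp: KV_iff)
  also have "\<dots> = {1..10}" by (rule permutes_image[OF pp])
  finally have s: "p ` A \<subseteq> {1..10}" .
  have "card (p ` A) = card A"
    by (rule card_image[OF inj_on_subset[OF permutes_inj[OF pp] subset_UNIV]])
  with s A show ?thesis by (simp add: KV_iff)
qed

lemma perm_DD: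
  assumes p: "p \<in> Perms" and AB: "(A,B) \<in> DD" shows "(p ` A, p ` B) \<in> DD"
proof -
  have pp: "p permutes {1..10}" using p by (simp add: Perms_def)
  have "p ` A \<inter> p ` B = p ` (A \<inter> B)" by (simp add: image_Int[OF permutes_inj[OF pp]])
  with AB perm_KV[OF p] show ?thesis by (auto simp: DD_def)
qed

lemma exists_perm:
  assumes AB0: "(A0,B0) \<in> DD" and AB: "(A,B) \<in> DD"
  shows "\<exists>p\<in>Perms. p ` A0 = A \<and> p ` B0 = B"
proof -
  define R0 where "R0 = {1..10::nat} - (A0 \<union> B0)"
  define R where "R = {1..10::nat} - (A \<union> B)"
  have h0: "A0 \<subseteq> {1..10}" "card A0 = 4" "B0 \<subseteq> {1..10}" "card B0 = 4" "A0 \<inter> B0 = {}"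
    using AB0 by (auto simp: DD_def KV_iff)
  have h1: "A \<subseteq> {1..10}" "card A = 4" "B \<subseteq> {1..10}" "card B = 4" "A \<inter> B = {}"
    using AB by (auto simp: DD_def KV_iff)
  have fin: "finite A0" "finite B0" "finite A" "finite B"
    using h0 h1 by (auto intro: finite_subset)
  have cR0: "card R0 = 2"
  proof -
    have "card (A0 \<union> B0) = 8" using h0 fin by (simp add: card_Un_disjoint)
    moreover have "A0 \<union> B0 \<subseteq> {1..10}" using h0 by auto
    ultimately show ?thesis unfolding R0_def by (simp add: card_Diff_subset fin)
  qed
  have cR: "card R = 2"
  proof -
    have "card (A \<union> B) = 8" using h1 fin by (simp add: card_Un_disjoint)
    moreover have "A \<union> B \<subseteq> {1..10}" using h1 by auto
    ultimately show ?thesis unfolding R_def by (simp add: card_Diff_subset fin)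
  qed
  obtain f where f: "bij_betw f A0 A" using finite_same_card_bij fin h0 h1 by metis
  obtain g where g: "bij_betw g B0 B" using finite_same_card_bij fin h0 h1 by metis
  obtain h where h: "bij_betw h R0 R" using finite_same_card_bij cR0 cR
    by (metis R0_def R_def finite_Diff finite_atLeastAtMost)
  have b1: "bij_betw (\<lambda>x. if x \<in> B0 then g x else h x) (B0 \<union> R0) (B \<union> R)"
    by (rule bij_betw_disjoint_Un[OF g h]) (auto simp: R0_def R_def)
  have b2: "bij_betw (\<lambda>x. if x \<in> A0 then f x else (if x \<in> B0 then g x else h x)) (A0 \<union> (B0 \<union> R0)) (A \<union> (B \<union> R))"
    by (rule bij_betw_disjoint_Un[OF f b1]) (use h0 h1 in \<open>auto simp: R0_def R_def\<close>)
  define t where "t = (\<lambda>x. if x \<in> A0 then f x else if x \<in> B0 then g x else if x \<in> R0 then h x else x)"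
  have e0: "A0 \<union> (B0 \<union> R0) = {1..10}" using h0 by (auto simp: R0_def)
  have e1: "A \<union> (B \<union> R) = {1..10}" using h1 by (auto simp: R_def)
  have bt: "bij_betw t {1..10} {1..10}"
  proof -
    have "bij_betw t (A0 \<union> (B0 \<union> R0)) (A \<union> (B \<union> R))"
      using b2 by (rule bij_betw_cong[THEN iffD1, rotated]) (auto simp: t_def)
    then show ?thesis using e0 e1 by simp
  qed
  have tp: "t permutes {1..10}"
    by (rule bij_imp_permutes[OF bt]) (use e0 in \<open>auto simp: t_def\<close>)
  have "t ` A0 = f ` A0" by (auto simp: t_def)
  also have "\<dots> = A" using f by (simp add: bij_betw_def)
  finally have tA: "t ` A0 = A" .
  have "t ` B0 = g ` B0" using h0 by (auto simp: t_def)
  also have "\<dots> = B" using g by (simp add: bij_betw_def)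
  finally have tB: "t ` B0 = B" .
  show ?thesis using tp tA tB by (auto simp: Perms_def)
qed

definition fib :: "nat set \<Rightarrow> nat set \<Rightarrow> nat set \<Rightarrow> nat set \<Rightarrow> (nat \<Rightarrow> nat) set" where
  "fib A0 B0 A B = {p \<in> Perms. p ` A0 = A \<and> p ` B0 = B}"

lemma fib_le:
  assumes AB0: "(A0,B0) \<in> DD" and AB: "(A,B) \<in> DD"
  shows "card (fib A0 B0 A0 B0) \<le> card (fib A0 B0 A B)"
proof -
  obtain t where t: "t \<in> Perms" "t ` A0 = A" "t ` B0 = B" using exists_perm[OF AB0 AB] by blast
  have tp: "t permutes {1..10}" using t by (simp add: Perms_def)
  have fin: "finite (fib A0 B0 A B)" using finite_Perms by (simp add: fib_def)
  have "inj_on ((\<circ>) t) (fib A0 B0 A0 B0)"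
  proof (rule inj_onI)
    fix x y assume "t \<circ> x = t \<circ> y"
    then show "x = y" using permutes_inj[OF tp] by (auto simp: fun_eq_iff inj_def)
  qed
  moreover have "(\<circ>) t ` fib A0 B0 A0 B0 \<subseteq> fib A0 B0 A B"
  proof
    fix q assume "q \<in> (\<circ>) t ` fib A0 B0 A0 B0"
    then obtain s where s: "s \<in> fib A0 B0 A0 B0" "q = t \<circ> s" by blast
    have "s permutes {1..10}" using s by (simp add: fib_def Perms_def)
    then have "t \<circ> s permutes {1..10}" using permutes_compose tp by blast
    moreover have "(t \<circ> s) ` A0 = t ` (s ` A0)" "(t \<circ> s) ` B0 = t ` (s ` B0)" by (simp_all add: image_image comp_def)
    then have "(t \<circ> s) ` A0 = A" "(t \<circ> s) ` B0 = B" using s t by (auto simp: fib_def)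
    ultimately show "q \<in> fib A0 B0 A B" using s by (simp add: fib_def Perms_def)
  qed
  ultimately show ?thesis using fin by (simp add: card_inj_on_le)
qed

lemma fib_ge:
  assumes AB0: "(A0,B0) \<in> DD" and AB: "(A,B) \<in> DD"
  shows "card (fib A0 B0 A B) \<le> card (fib A0 B0 A0 B0)"
proof -
  obtain t where t: "t \<in> Perms" "t ` A = A0" "t ` B = B0" using exists_perm[OF AB AB0] by blast
  have tp: "t permutes {1..10}" using t by (simp add: Perms_def)
  have fin: "finite (fib A0 B0 A0 B0)" using finite_Perms by (simp add: fib_def)
  have "inj_on ((\<circ>) t) (fib A0 B0 A B)"
  proof (rule inj_onI)
    fix x y assume "t \<circ> x = t \<circ> y"
    then show "x = y" using permutes_inj[OF tp] by (auto simp: fun_eq_iff inj_def)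
  qed
  moreover have "(\<circ>) t ` fib A0 B0 A B \<subseteq> fib A0 B0 A0 B0"
  proof
    fix q assume "q \<in> (\<circ>) t ` fib A0 B0 A B"
    then obtain s where s: "s \<in> fib A0 B0 A B" "q = t \<circ> s" by blast
    have "s permutes {1..10}" using s by (simp add: fib_def Perms_def)
    then have "t \<circ> s permutes {1..10}" using permutes_compose tp by blast
    moreover have "(t \<circ> s) ` A0 = t ` (s ` A0)" "(t \<circ> s) ` B0 = t ` (s ` B0)" by (simp_all add: image_image comp_def)
    then have "(t \<circ> s) ` A0 = A0" "(t \<circ> s) ` B0 = B0" using s t by (auto simp: fib_def)
    ultimately show "q \<in> fib A0 B0 A0 B0" using s by (simp add: fib_def Perms_def)
  qed
  ultimately show ?thesis using fin by (simp add: card_inj_on_le)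
qed

lemma pair_sum:
  fixes G :: "nat set \<Rightarrow> nat set \<Rightarrow> real"
  assumes AB0: "(A0,B0) \<in> DD"
  shows "real (card DD) * (\<Sum>p\<in>Perms. G (p ` A0) (p ` B0)) = fact 10 * (\<Sum>(A,B)\<in>DD. G A B)"
proof -
  define c where "c = card (fib A0 B0 A0 B0)"
  have cfib: "card (fib A0 B0 A B) = c" if "(A,B) \<in> DD" for A B
    using fib_le[OF AB0 that] fib_ge[OF AB0 that] by (simp add: c_def)
  have gen: "(\<Sum>p\<in>Perms. H (p ` A0, p ` B0)) = real c * (\<Sum>z\<in>DD. H z)" for H :: "nat set \<times> nat set \<Rightarrow> real"
  proof -
    have "(\<Sum>p\<in>Perms. H (p ` A0, p ` B0)) = (\<Sum>z\<in>DD. \<Sum>p\<in>{p. p \<in> Perms \<and> (p ` A0, p ` B0) = z}. H (p ` A0, p ` B0))"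
      by (rule sum.group[symmetric]) (use finite_Perms finite_DD perm_DD AB0 in auto)
    also have "\<dots> = (\<Sum>z\<in>DD. \<Sum>p\<in>{p. p \<in> Perms \<and> (p ` A0, p ` B0) = z}. H z)"
      by (rule sum.cong) auto
    also have "\<dots> = (\<Sum>z\<in>DD. real c * H z)"
    proof (rule sum.cong[OF refl])
      fix z assume z: "z \<in> DD"
      obtain A B where zAB: "z = (A,B)" by (cases z)
      have "{p. p \<in> Perms \<and> (p ` A0, p ` B0) = z} = fib A0 B0 A B" by (auto simp: fib_def zAB)
      then show "(\<Sum>p\<in>{p. p \<in> Perms \<and> (p ` A0, p ` B0) = z}. H z) = real c * H z"
        using cfib z zAB by simp
    qed
    also have "\<dots> = real c * (\<Sum>z\<in>DD. H z)" by (simp add: sum_distrib_left)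
    finally show ?thesis .
  qed
  have "real (fact 10) = real (card Perms)" by (simp add: card_Perms)
  also have "\<dots> = (\<Sum>p\<in>Perms. (\<lambda>z. 1::real) (p ` A0, p ` B0))" by simp
  also have "\<dots> = real c * real (card DD)" using gen[of "\<lambda>z. 1"] by simp
  finally have fc: "real (fact 10) = real c * real (card DD)" .
  have "real (card DD) * (\<Sum>p\<in>Perms. G (p ` A0) (p ` B0)) = real (card DD) * (real c * (\<Sum>z\<in>DD. case_prod G z))"
    using gen[of "case_prod G"] by simp
  also have "\<dots> = fact 10 * (\<Sum>(A,B)\<in>DD. G A B)" using fc by simp
  finally show ?thesis .
qed


definition gg :: "real \<Rightarrow> real \<Rightarrow> real" where "gg a b = a * b + (a^2 + b^2) / 3"

lemma pet_alg:
  fixes a12 a13 a14 a15 a23 a24 a25 a34 a35 a45 :: real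
  shows "0 \<le> gg a12 a34 + gg a12 a35 + gg a12 a45 + gg a13 a24 + gg a13 a25 + gg a13 a45
    + gg a14 a23 + gg a14 a25 + gg a14 a35 + gg a15 a23 + gg a15 a24 + gg a15 a34
    + gg a23 a45 + gg a24 a35 + gg a25 a34"
proof -
  have "gg a12 a34 + gg a12 a35 + gg a12 a45 + gg a13 a24 + gg a13 a25 + gg a13 a45
    + gg a14 a23 + gg a14 a25 + gg a14 a35 + gg a15 a23 + gg a15 a24 + gg a15 a34
    + gg a23 a45 + gg a24 a35 + gg a25 a34 =
    (a12+a13+a14+a15+a23+a24+a25+a34+a35+a45)^2 / 4
    + ((a23+a45-a24-a35)^2 + (a23+a45-a25-a34)^2 + (a24+a35-a25-a34)^2
     + (a13+a45-a14-a35)^2 + (a13+a45-a15-a34)^2 + (a14+a35-a15-a34)^2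
     + (a12+a45-a14-a25)^2 + (a12+a45-a15-a24)^2 + (a14+a25-a15-a24)^2
     + (a12+a35-a13-a25)^2 + (a12+a35-a15-a23)^2 + (a13+a25-a15-a23)^2
     + (a12+a34-a13-a24)^2 + (a12+a34-a14-a23)^2 + (a13+a24-a14-a23)^2) / 8"
    unfolding gg_def by (simp add: power2_eq_square field_simps) algebra?
  also have "\<dots> \<ge> 0" by (intro add_nonneg_nonneg divide_nonneg_pos) simp_all
  finally show ?thesis by simp
qed


definition pv :: "nat \<Rightarrow> nat \<Rightarrow> nat set" where "pv i j = {2*i-1, 2*i, 2*j-1, 2*j}"

definition EL :: "(nat set \<times> nat set) list" where
  "EL = [(pv 1 2, pv 3 4), (pv 1 2, pv 3 5), (pv 1 2, pv 4 5), (pv 1 3, pv 2 4), (pv 1 3, pv 2 5),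
   (pv 1 3, pv 4 5), (pv 1 4, pv 2 3), (pv 1 4, pv 2 5), (pv 1 4, pv 3 5), (pv 1 5, pv 2 3),
   (pv 1 5, pv 2 4), (pv 1 5, pv 3 4), (pv 2 3, pv 4 5), (pv 2 4, pv 3 5), (pv 2 5, pv 3 4)]"

lemma EL_DD: "z \<in> set EL \<Longrightarrow> z \<in> DD"
  unfolding EL_def pv_def DD_def kneser_vertices_def by auto

lemma pet_local: "0 \<le> sum_list (map (\<lambda>z. gg (x (p ` fst z)) (x (p ` snd z))) EL)"
proof -
  have "sum_list (map (\<lambda>z. gg (x (p ` fst z)) (x (p ` snd z))) EL) =
    gg (x (p ` pv 1 2)) (x (p ` pv 3 4)) + gg (x (p ` pv 1 2)) (x (p ` pv 3 5)) + gg (x (p ` pv 1 2)) (x (p ` pv 4 5))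
  + gg (x (p ` pv 1 3)) (x (p ` pv 2 4)) + gg (x (p ` pv 1 3)) (x (p ` pv 2 5)) + gg (x (p ` pv 1 3)) (x (p ` pv 4 5))
  + gg (x (p ` pv 1 4)) (x (p ` pv 2 3)) + gg (x (p ` pv 1 4)) (x (p ` pv 2 5)) + gg (x (p ` pv 1 4)) (x (p ` pv 3 5))
  + gg (x (p ` pv 1 5)) (x (p ` pv 2 3)) + gg (x (p ` pv 1 5)) (x (p ` pv 2 4)) + gg (x (p ` pv 1 5)) (x (p ` pv 3 4))
  + gg (x (p ` pv 2 3)) (x (p ` pv 4 5)) + gg (x (p ` pv 2 4)) (x (p ` pv 3 5)) + gg (x (p ` pv 2 5)) (x (p ` pv 3 4))"
    unfolding EL_def by (simp add: add.assoc)
  also have "\<dots> \<ge> 0" by (rule pet_alg)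
  finally show ?thesis .
qed

lemma swap_sl: "(\<Sum>p\<in>P. sum_list (map (\<lambda>e. F e p) L)) = sum_list (map (\<lambda>e. \<Sum>p\<in>P. F e p) L)"
  by (induction L) (simp_all add: sum.distrib)

definition nb :: "nat set \<Rightarrow> nat set set" where "nb A = {B \<in> KV. A \<inter> B = {}}"

lemma nb_eq: "A \<in> KV \<Longrightarrow> nb A = {B. B \<subseteq> {1..10} - A \<and> card B = 4}"
  unfolding nb_def kneser_vertices_def by blast

lemma c64: "(6::nat) choose 4 = 15" by code_simp

lemma card_nb: "A \<in> KV \<Longrightarrow> card (nb A) = 15"
proof -
  assume A: "A \<in> KV"
  have sub: "A \<subseteq> {1..10}" and cA: "card A = 4" using A by (simp_all add: KV_iff)
  have fin: "finite A" using sub finite_subset by blast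
  have "card ({1..10::nat} - A) = card {1..10::nat} - card A" by (rule card_Diff_subset[OF fin sub])
  then have "card ({1..10::nat} - A) = 6" using cA by simp
  then show ?thesis using A by (simp add: nb_eq n_subsets c64)
qed

lemma DD_Sigma: "DD = Sigma KV nb"
  unfolding DD_def nb_def by auto

lemma sum_DD_fst: fixes f :: "nat set \<Rightarrow> real" shows "(\<Sum>(A,B)\<in>DD. f A) = 15 * (\<Sum>A\<in>KV. f A)"
proof -
  have "(\<Sum>(A,B)\<in>DD. f A) = (\<Sum>A\<in>KV. \<Sum>B\<in>nb A. f A)"
    unfolding DD_Sigma by (rule sum.Sigma[symmetric]) (auto simp: finite_KV nb_def intro: finite_subset[OF _ finite_KV])
  also have "\<dots> = (\<Sum>A\<in>KV. 15 * f A)" by (rule sum.cong) (auto simp: card_nb)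
  finally show ?thesis by (simp add: sum_distrib_left)
qed

lemma sum_DD_swap: "(\<Sum>(A,B)\<in>DD. f A B) = (\<Sum>(A,B)\<in>DD. f B A)"
  by (rule sum.reindex_bij_witness[where i=prod.swap and j=prod.swap]) (auto simp: DD_def)

lemma sum_DD_snd: fixes f :: "nat set \<Rightarrow> real" shows "(\<Sum>(A,B)\<in>DD. f B) = 15 * (\<Sum>A\<in>KV. f A)"
  using sum_DD_swap[of "\<lambda>A B. f B"] sum_DD_fst[of f] by simp

theorem P1:
  fixes x :: "nat set \<Rightarrow> real"
  shows "0 \<le> (\<Sum>(A,B)\<in>DD. x A * x B) + 10 * (\<Sum>A\<in>KV. (x A)^2)"
proof -
  define G where "G = (\<lambda>A B. gg (x A) (x B))"
  define H where "H = (\<lambda>(z::nat set \<times> nat set) (p::nat\<Rightarrow>nat). G (p ` fst z) (p ` snd z))"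
  have each: "real (card DD) * (\<Sum>p\<in>Perms. H z p) = fact 10 * (\<Sum>(A,B)\<in>DD. G A B)"
    if "z \<in> set EL" for z
  proof -
    obtain e f where z: "z = (e,f)" by (cases z)
    show ?thesis using pair_sum[OF EL_DD[OF that[unfolded z]], of G] by (simp add: H_def z)
  qed
  have "(\<Sum>(A,B)\<in>DD. G A B) = (\<Sum>(A,B)\<in>DD. x A * x B) + (\<Sum>(A,B)\<in>DD. (x A)^2) / 3 + (\<Sum>(A,B)\<in>DD. (x B)^2) / 3"
    unfolding G_def gg_def by (simp add: sum.distrib case_prod_beta add_divide_distrib sum_divide_distrib)
  also have "\<dots> = (\<Sum>(A,B)\<in>DD. x A * x B) + 10 * (\<Sum>A\<in>KV. (x A)^2)"
    using sum_DD_fst[of "\<lambda>A. (x A)^2"] sum_DD_snd[of "\<lambda>A. (x A)^2"] by simp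
  finally have GD: "(\<Sum>(A,B)\<in>DD. G A B) = (\<Sum>(A,B)\<in>DD. x A * x B) + 10 * (\<Sum>A\<in>KV. (x A)^2)" .
  have nn: "0 \<le> (\<Sum>p\<in>Perms. sum_list (map (\<lambda>z. H z p) EL))"
  proof (rule sum_nonneg)
    fix p show "0 \<le> sum_list (map (\<lambda>z. H z p) EL)"
      unfolding H_def G_def by (rule pet_local)
  qed
  have "real (card DD) * (\<Sum>p\<in>Perms. sum_list (map (\<lambda>z. H z p) EL))
      = real (card DD) * sum_list (map (\<lambda>z. \<Sum>p\<in>Perms. H z p) EL)"
    by (simp only: swap_sl)
  also have "\<dots> = sum_list (map (\<lambda>z. real (card DD) * (\<Sum>p\<in>Perms. H z p)) EL)"
    by (simp only: sum_list_const_mult[symmetric] map_map o_def)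
  also have "\<dots> = sum_list (map (\<lambda>z. fact 10 * (\<Sum>(A,B)\<in>DD. G A B)) EL)"
    by (rule arg_cong[where f=sum_list], rule map_cong[OF refl], erule each)
  also have "\<dots> = of_nat (length EL) * (fact 10 * (\<Sum>(A,B)\<in>DD. G A B))"
    by (rule sum_list_triv)
  also have "length EL = 15" by (simp add: EL_def)
  finally have eq: "real (card DD) * (\<Sum>p\<in>Perms. sum_list (map (\<lambda>z. H z p) EL)) = 15 * (fact 10 * (\<Sum>(A,B)\<in>DD. G A B))" by simp
  have "0 \<le> 15 * (fact 10 * (\<Sum>(A,B)\<in>DD. G A B))"
    using eq nn by (metis of_nat_0_le_iff mult_nonneg_nonneg)
  then have h15: "0 \<le> (15 * fact 10) * (\<Sum>(A,B)\<in>DD. G A B)" by (simp add: mult.assoc)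
  have fp: "(0::real) < 15 * fact 10" by simp
  have "0 \<le> (\<Sum>(A,B)\<in>DD. G A B)"
    using h15 fp by (metis less_le_not_le zero_le_mult_iff)
  then show ?thesis using GD by simp
qed


lemma c54: "(5::nat) choose 4 = 5" by code_simp
lemma c32: "(3::nat) choose 2 = 3" by code_simp

lemma nb_sub: "nb A \<subseteq> KV" by (auto simp: nb_def)
lemma finite_nb: "finite (nb A)" using finite_subset[OF nb_sub finite_KV] .
lemma KV_fin: "A \<in> KV \<Longrightarrow> finite A" by (auto simp: KV_iff intro: finite_subset)
lemma KV_ne: "A \<in> KV \<Longrightarrow> A \<noteq> {}" by (auto simp: KV_iff)
lemma nb_sym: "A \<in> KV \<Longrightarrow> B \<in> nb A \<Longrightarrow> A \<in> nb B" by (auto simp: nb_def)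
lemma nb_iff: "B \<in> nb A \<longleftrightarrow> B \<in> KV \<and> A \<inter> B = {}" by (simp add: nb_def)
lemma not_self: "A \<in> KV \<Longrightarrow> A \<notin> nb A" using KV_ne by (auto simp: nb_def)

lemma nb_indep:
  assumes A: "A \<in> KV" and B: "B \<in> nb A" and C: "C \<in> nb A" shows "B \<inter> C \<noteq> {}"
proof
  assume BC: "B \<inter> C = {}"
  have sA: "A \<subseteq> {1..10}" "card A = 4" using A by (simp_all add: KV_iff)
  have sB: "B \<subseteq> {1..10}" "card B = 4" "A \<inter> B = {}" using B by (simp_all add: nb_def KV_iff)
  have sC: "C \<subseteq> {1..10}" "card C = 4" "A \<inter> C = {}" using C by (simp_all add: nb_def KV_iff)
  have fin: "finite A" "finite B" "finite C" using sA sB sC finite_subset by blast+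
  have "card (B \<union> C) = 8" using BC fin sB sC by (simp add: card_Un_disjoint)
  moreover have "B \<union> C \<subseteq> {1..10} - A" using sB sC by auto
  moreover have "card ({1..10::nat} - A) = 6" using sA fin by (simp add: card_Diff_subset)
  moreover have "card (B \<union> C) \<le> card ({1..10::nat} - A)"
    by (rule card_mono) (use sB sC in auto)
  ultimately show False by simp
qed

lemma codeg:
  assumes A: "A \<in> KV" and B: "B \<in> KV" and AB: "A \<noteq> B"
  shows "card (nb A \<inter> nb B) \<le> 5"
proof -
  have sA: "A \<subseteq> {1..10}" "card A = 4" using A by (simp_all add: KV_iff)
  have sB: "B \<subseteq> {1..10}" "card B = 4" using B by (simp_all add: KV_iff)
  have fin: "finite A" "finite B" using sA sB finite_subset by blast+
  have "\<not> B \<subseteq> A"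
  proof
    assume "B \<subseteq> A" then have "B = A" using card_subset_eq[OF fin(1)] sA sB by metis
    with AB show False by simp
  qed
  then obtain b where b: "b \<in> B" "b \<notin> A" by blast
  have "card (insert b A) = 5" using b fin sA by simp
  moreover have "insert b A \<subseteq> A \<union> B" using b by auto
  ultimately have c5: "5 \<le> card (A \<union> B)" by (metis card_mono fin finite_UnI)
  have eq: "nb A \<inter> nb B = {C. C \<subseteq> {1..10} - (A \<union> B) \<and> card C = 4}"
    unfolding nb_def kneser_vertices_def by blast
  have "card ({1..10::nat} - (A \<union> B)) = 10 - card (A \<union> B)"
    using sA sB fin by (simp add: card_Diff_subset)
  then have r: "card ({1..10::nat} - (A \<union> B)) \<le> 5" using c5 by simp
  have "card (nb A \<inter> nb B) = card ({1..10::nat} - (A \<union> B)) choose 4"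
    unfolding eq by (rule n_subsets) simp
  also have "\<dots> \<le> 5 choose 4" by (rule binomial_right_mono[OF r])
  finally show ?thesis by (simp add: c54)
qed

lemma dc:
  assumes X: "X \<subseteq> KV" and Y: "Y \<subseteq> KV"
  shows "(\<Sum>A\<in>X. card (nb A \<inter> Y)) = (\<Sum>B\<in>Y. card (nb B \<inter> X))"
proof -
  have fX: "finite X" and fY: "finite Y" using X Y finite_KV finite_subset by blast+
  have e1: "card (nb A \<inter> Y) = (\<Sum>B\<in>Y. if A \<inter> B = {} then 1 else 0)" for A
  proof -
    have "nb A \<inter> Y = {B \<in> Y. A \<inter> B = {}}" using Y by (auto simp: nb_def)
    then have "card (nb A \<inter> Y) = (\<Sum>B\<in>{B \<in> Y. A \<inter> B = {}}. 1)" by simp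
    also have "\<dots> = (\<Sum>B\<in>Y. if A \<inter> B = {} then 1 else 0)" by (rule sum.inter_filter[OF fY])
    finally show ?thesis .
  qed
  have e2: "card (nb B \<inter> X) = (\<Sum>A\<in>X. if A \<inter> B = {} then 1 else 0)" for B
  proof -
    have "nb B \<inter> X = {A \<in> X. A \<inter> B = {}}" using X by (auto simp: nb_def)
    then have "card (nb B \<inter> X) = (\<Sum>A\<in>{A \<in> X. A \<inter> B = {}}. 1)" by simp
    also have "\<dots> = (\<Sum>A\<in>X. if A \<inter> B = {} then 1 else 0)" by (rule sum.inter_filter[OF fX])
    finally show ?thesis .
  qed
  show ?thesis unfolding e1 e2 by (rule sum.swap)
qed

definition cut :: "nat set set \<Rightarrow> nat" where "cut X = (\<Sum>A\<in>X. card (nb A - X))"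

lemma cut_alt: "X \<subseteq> KV \<Longrightarrow> cut X = (\<Sum>A\<in>X. card (nb A \<inter> (KV - X)))"
proof -
  have "nb A - X = nb A \<inter> (KV - X)" for A using nb_sub by blast
  then show ?thesis by (simp add: cut_def)
qed

lemma cut_sym: assumes X: "X \<subseteq> KV" shows "cut (KV - X) = cut X"
proof -
  have "cut (KV - X) = (\<Sum>A\<in>KV - X. card (nb A \<inter> (KV - (KV - X))))" by (rule cut_alt) blast
  also have "KV - (KV - X) = X" using X by blast
  also have "(\<Sum>A\<in>KV - X. card (nb A \<inter> X)) = (\<Sum>A\<in>X. card (nb A \<inter> (KV - X)))"
    by (rule dc) (use X in auto)
  also have "\<dots> = cut X" by (rule cut_alt[OF X, symmetric])
  finally show ?thesis .
qed

lemma card_nb_split: "A \<in> KV \<Longrightarrow> card (nb A \<inter> X) + card (nb A - X) = 15"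
  using card_Int_Diff[OF finite_nb, of A X] card_nb by simp

lemma lemY:
  assumes X: "X \<subseteq> KV" and c14: "14 \<le> card X" and c42: "card X \<le> 42"
  shows "38 \<le> cut X"
proof (rule ccontr)
  assume "\<not> 38 \<le> cut X"
  then have c37: "cut X \<le> 37" by simp
  have fX: "finite X" using X finite_KV finite_subset by blast
  have "\<exists>v\<in>X. card (nb v - X) \<le> 2"
  proof (rule ccontr)
    assume "\<not> (\<exists>v\<in>X. card (nb v - X) \<le> 2)"
    then have "\<And>A. A \<in> X \<Longrightarrow> 3 \<le> card (nb A - X)" by force
    then have "(\<Sum>A\<in>X. (3::nat)) \<le> (\<Sum>A\<in>X. card (nb A - X))" by (rule sum_mono)
    then have "card X * 3 \<le> cut X" unfolding cut_def by simp
    with c14 c37 show False by simp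
  qed
  then obtain v where v: "v \<in> X" "card (nb v - X) \<le> 2" by blast
  have vK: "v \<in> KV" using v X by blast
  define Z where "Z = nb v \<inter> X"
  define Y where "Y = X - Z - {v}"
  have cZ: "13 \<le> card Z" using card_nb_split[OF vK, of X] v by (simp add: Z_def)
  have ZX: "Z \<subseteq> X" by (simp add: Z_def)
  have vZ: "v \<notin> Z" using not_self[OF vK] by (simp add: Z_def)
  have fZ: "finite Z" using ZX fX finite_subset by blast
  have cY: "card Y + card Z + 1 = card X"
  proof -
    have "card (X - Z) = card X - card Z" using ZX fZ by (simp add: card_Diff_subset)
    moreover have "card (X - Z - {v}) = card (X - Z) - 1" using v vZ by (simp add: card_Diff_singleton)
    moreover have "card Z \<le> card X" using ZX fX card_mono by blast
    moreover have "card Z < card X"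
    proof (rule psubset_card_mono[OF fX])
      show "Z \<subset> X" using ZX vZ v by blast
    qed
    ultimately show ?thesis by (simp add: Y_def)
  qed
  have YK: "Y \<subseteq> KV" and ZK: "Z \<subseteq> KV" using X ZX by (auto simp: Y_def)
  have vY: "v \<notin> Y" by (simp add: Y_def)
  have key: "14 \<le> card (nb z - X) + card (nb z \<inter> Y)" if z: "z \<in> Z" for z
  proof -
    have zK: "z \<in> KV" using z ZK by blast
    have "nb z \<inter> X \<subseteq> insert v (nb z \<inter> Y)"
    proof
      fix w assume w: "w \<in> nb z \<inter> X"
      show "w \<in> insert v (nb z \<inter> Y)"
      proof (cases "w = v")
        case True then show ?thesis by simp
      next
        case False
        have "w \<notin> Z"
        proof
          assume "w \<in> Z"
          then have "w \<in> nb v" "z \<in> nb v" using z by (auto simp: Z_def)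
          then have "w \<inter> z \<noteq> {}" using nb_indep[OF vK] by blast
          moreover have "z \<inter> w = {}" using w by (simp add: nb_def)
          ultimately show False by blast
        qed
        then show ?thesis using w False by (simp add: Y_def)
      qed
    qed
    then have "card (nb z \<inter> X) \<le> card (insert v (nb z \<inter> Y))"
      by (rule card_mono[rotated]) (simp add: finite_nb)
    also have "\<dots> \<le> Suc (card (nb z \<inter> Y))" by (simp add: card_insert_if finite_nb)
    finally show ?thesis using card_nb_split[OF zK, of X] by simp
  qed
  have s1: "(\<Sum>z\<in>Z. card (nb z - X)) \<le> cut X"
    unfolding cut_def by (rule sum_mono2[OF fX ZX]) simp
  have s2: "(\<Sum>z\<in>Z. card (nb z \<inter> Y)) \<le> 5 * card Y"
  proof -
    have "(\<Sum>z\<in>Z. card (nb z \<inter> Y)) = (\<Sum>y\<in>Y. card (nb y \<inter> Z))" by (rule dc[OF ZK YK])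
    also have "\<dots> \<le> (\<Sum>y\<in>Y. 5)"
    proof (rule sum_mono)
      fix y assume y: "y \<in> Y"
      have yK: "y \<in> KV" using y YK by blast
      have "y \<noteq> v" using y vY by blast
      have "card (nb y \<inter> Z) \<le> card (nb y \<inter> nb v)"
        by (rule card_mono) (auto simp: finite_nb Z_def)
      also have "\<dots> \<le> 5" using codeg[OF yK vK \<open>y \<noteq> v\<close>] .
      finally show "card (nb y \<inter> Z) \<le> 5" .
    qed
    finally show ?thesis by simp
  qed
  have "(\<Sum>z\<in>Z. 14) \<le> (\<Sum>z\<in>Z. card (nb z - X) + card (nb z \<inter> Y))"
    by (rule sum_mono) (rule key)
  then have "14 * card Z \<le> (\<Sum>z\<in>Z. card (nb z - X)) + (\<Sum>z\<in>Z. card (nb z \<inter> Y))"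
    by (simp add: sum.distrib)
  with s1 s2 c37 have "14 * card Z \<le> 37 + 5 * card Y" by linarith
  with cY cZ c42 show False by linarith
qed


lemma card_V: "card KV = 210"
proof -
  have "card {A. A \<subseteq> {1..10::nat} \<and> card A = 4} = card {1..10::nat} choose 4"
    by (rule n_subsets) simp
  also have "\<dots> = 210" by code_simp
  finally show ?thesis by (simp add: kneser_vertices_def)
qed

lemma nine:
  assumes v: "v \<in> KV" and B: "B \<in> KV" and c1: "card (B \<inter> v) = 1"
  shows "9 \<le> card {z \<in> nb B. 2 \<le> card (z \<inter> v)}"
proof -
  have sv: "v \<subseteq> {1..10}" "card v = 4" using v by (simp_all add: KV_iff)
  have sB: "B \<subseteq> {1..10}" "card B = 4" using B by (simp_all add: KV_iff)
  have fin: "finite v" "finite B" using sv sB finite_subset by blast+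
  define P where "P = v - B"
  define Q where "Q = {1..10::nat} - B - v"
  have cP: "card P = 3"
  proof -
    have "card (v - B) = card v - card (v \<inter> B)" by (rule card_Diff_subset_Int) (simp add: fin)
    then show ?thesis using sv c1 by (simp add: P_def Int_commute)
  qed
  have cU: "card (B \<union> v) = 7"
  proof -
    have "card (B \<union> v) + card (B \<inter> v) = card B + card v" using card_Un_Int[OF fin(2) fin(1)] by simp
    then show ?thesis using sv sB c1 by simp
  qed
  have cQ: "card Q = 3"
  proof -
    have "Q = {1..10} - (B \<union> v)" by (auto simp: Q_def)
    moreover have "card ({1..10::nat} - (B \<union> v)) = card {1..10::nat} - card (B \<union> v)"
      by (rule card_Diff_subset) (use fin sv sB in auto)
    ultimately show ?thesis using cU by simp
  qed
  have fP: "finite P" and fQ: "finite Q" using fin by (auto simp: P_def Q_def)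
  define PS where "PS = {S. S \<subseteq> P \<and> card S = 2}"
  define QS where "QS = {T. T \<subseteq> Q \<and> card T = 2}"
  have cPS: "card PS = 3" unfolding PS_def using n_subsets[OF fP, of 2] cP c32 by simp
  have cQS: "card QS = 3" unfolding QS_def using n_subsets[OF fQ, of 2] cQ c32 by simp
  define f where "f = (\<lambda>(S::nat set,T::nat set). S \<union> T)"
  have inj: "inj_on f (PS \<times> QS)"
  proof (rule inj_onI)
    fix a b assume a: "a \<in> PS \<times> QS" and b: "b \<in> PS \<times> QS" and fab: "f a = f b"
    obtain S T where ab1: "a = (S,T)" by (cases a)
    obtain S' T' where ab2: "b = (S',T')" by (cases b)
    have h: "S \<subseteq> v" "T \<inter> v = {}" "S' \<subseteq> v" "T' \<inter> v = {}"
      using a b ab1 ab2 by (auto simp: PS_def QS_def P_def Q_def)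
    have e: "S \<union> T = S' \<union> T'" using fab ab1 ab2 by (simp add: f_def)
    have "S = (S \<union> T) \<inter> v" "S' = (S' \<union> T') \<inter> v" using h by auto
    then have "S = S'" using e by simp
    moreover have "T = (S \<union> T) - v" "T' = (S' \<union> T') - v" using h by auto
    then have "T = T'" using e by simp
    ultimately show "a = b" using ab1 ab2 by simp
  qed
  have img: "f ` (PS \<times> QS) \<subseteq> {z \<in> nb B. 2 \<le> card (z \<inter> v)}"
  proof
    fix z assume "z \<in> f ` (PS \<times> QS)"
    then obtain S T where ST: "S \<in> PS" "T \<in> QS" "z = S \<union> T" by (auto simp: f_def)
    have h: "S \<subseteq> v" "S \<inter> B = {}" "T \<inter> v = {}" "T \<inter> B = {}" "S \<subseteq> {1..10}" "T \<subseteq> {1..10}"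
      "card S = 2" "card T = 2"
      using ST sv by (auto simp: PS_def QS_def P_def Q_def)
    have fST: "finite S" "finite T" using h finite_subset by blast+
    have "S \<inter> T = {}" using h by blast
    then have "card z = 4" using ST h fST by (simp add: card_Un_disjoint)
    moreover have "z \<subseteq> {1..10}" using ST h by auto
    moreover have "B \<inter> z = {}" using ST h by auto
    moreover have "2 \<le> card (z \<inter> v)"
    proof -
      have "S \<subseteq> z \<inter> v" using ST h by auto
      then have "card S \<le> card (z \<inter> v)" by (rule card_mono[rotated]) (use fin in simp)
      then show ?thesis using h by simp
    qed
    ultimately show "z \<in> {z \<in> nb B. 2 \<le> card (z \<inter> v)}" by (simp add: nb_def KV_iff)
  qed
  have "card (PS \<times> QS) \<le> card {z \<in> nb B. 2 \<le> card (z \<inter> v)}"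
    by (rule card_inj_on_le[OF inj img]) (simp add: finite_nb)
  then show ?thesis using cPS cQS by (simp add: card_cartesian_product)
qed


lemma common_nb:
  assumes v: "v \<in> KV" and B: "B \<in> KV" and c2: "2 \<le> card (B \<inter> v)"
  shows "\<exists>C. C \<in> nb v \<and> C \<in> nb B"
proof -
  have sv: "v \<subseteq> {1..10}" "card v = 4" using v by (simp_all add: KV_iff)
  have sB: "B \<subseteq> {1..10}" "card B = 4" using B by (simp_all add: KV_iff)
  have fin: "finite v" "finite B" using sv sB finite_subset by blast+
  have "card (B \<union> v) + card (B \<inter> v) = card B + card v" using card_Un_Int[OF fin(2) fin(1)] by simp
  then have cU: "card (B \<union> v) \<le> 6" using sv sB c2 by simp
  have "card ({1..10::nat} - (B \<union> v)) = card {1..10::nat} - card (B \<union> v)"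
    by (rule card_Diff_subset) (use fin sv sB in auto)
  then have "4 \<le> card ({1..10::nat} - (B \<union> v))" using cU by simp
  then obtain C where C: "C \<subseteq> {1..10::nat} - (B \<union> v)" "card C = 4"
    by (meson obtain_subset_with_card_n)
  then have "C \<in> nb v" "C \<in> nb B" by (auto simp: nb_def KV_iff)
  then show ?thesis by blast
qed


lemma lemInt:
  assumes X: "X \<subseteq> KV" and v: "v \<in> X" and nbv: "nb v \<subseteq> X" and c37: "cut X \<le> 37"
  shows "card (KV - X) \<le> 98"
proof -
  define R where "R = KV - X"
  define R2 where "R2 = {w \<in> R. 2 \<le> card (w \<inter> v)}"
  define R3 where "R3 = {w \<in> R. card (w \<inter> v) = 1}"
  have vK: "v \<in> KV" using v X by blast
  have fR: "finite R" using finite_KV by (simp add: R_def)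
  have RK: "R \<subseteq> KV" by (simp add: R_def)
  have R23: "R = R2 \<union> R3"
  proof
    show "R \<subseteq> R2 \<union> R3"
    proof
      fix w assume w: "w \<in> R"
      have wK: "w \<in> KV" using w by (simp add: R_def)
      have "w \<notin> nb v" using w nbv by (auto simp: R_def)
      then have "w \<inter> v \<noteq> {}" using wK by (auto simp: nb_def)
      moreover have "finite (w \<inter> v)" using KV_fin[OF wK] by simp
      ultimately have "1 \<le> card (w \<inter> v)" by (simp add: Suc_le_eq card_gt_0_iff)
      then show "w \<in> R2 \<union> R3" using w by (auto simp: R2_def R3_def)
    qed
  qed (auto simp: R2_def R3_def)
  have disj: "R2 \<inter> R3 = {}" by (auto simp: R2_def R3_def)
  have fR2: "finite R2" and fR3: "finite R3" using fR by (auto simp: R2_def R3_def)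
  have R2K: "R2 \<subseteq> KV" and R3K: "R3 \<subseteq> KV" using RK by (auto simp: R2_def R3_def)
  have cutR: "cut X = (\<Sum>B\<in>R. card (nb B \<inter> X))"
    using cut_alt[OF X] dc[OF X RK] by (simp add: R_def)
  also have "\<dots> = (\<Sum>B\<in>R2. card (nb B \<inter> X)) + (\<Sum>B\<in>R3. card (nb B \<inter> X))"
    unfolding R23 by (rule sum.union_disjoint[OF fR2 fR3 disj])
  finally have cs: "cut X = (\<Sum>B\<in>R2. card (nb B \<inter> X)) + (\<Sum>B\<in>R3. card (nb B \<inter> X))" .
  have p2: "card R2 \<le> (\<Sum>B\<in>R2. card (nb B \<inter> X))"
  proof -
    have "(\<Sum>B\<in>R2. (1::nat)) \<le> (\<Sum>B\<in>R2. card (nb B \<inter> X))"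
    proof (rule sum_mono)
      fix B assume B: "B \<in> R2"
      have BK: "B \<in> KV" using B R2K by blast
      obtain C where C: "C \<in> nb v" "C \<in> nb B" using common_nb[OF vK BK] B by (auto simp: R2_def)
      have "C \<in> nb B \<inter> X" using C nbv by blast
      then have "nb B \<inter> X \<noteq> {}" by blast
      then show "1 \<le> card (nb B \<inter> X)" using finite_nb by (simp add: Suc_le_eq card_gt_0_iff)
    qed
    then show ?thesis by simp
  qed
  have p3: "9 * card R3 \<le> (\<Sum>B\<in>R3. card (nb B \<inter> X)) + (\<Sum>B\<in>R3. card (nb B \<inter> R2))"
  proof -
    have "(\<Sum>B\<in>R3. (9::nat)) \<le> (\<Sum>B\<in>R3. card (nb B \<inter> X) + card (nb B \<inter> R2))"
    proof (rule sum_mono)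
      fix B assume B: "B \<in> R3"
      have BK: "B \<in> KV" using B R3K by blast
      have "{z \<in> nb B. 2 \<le> card (z \<inter> v)} \<subseteq> (nb B \<inter> X) \<union> (nb B \<inter> R2)"
        using nb_sub by (auto simp: R2_def R_def)
      then have "card {z \<in> nb B. 2 \<le> card (z \<inter> v)} \<le> card ((nb B \<inter> X) \<union> (nb B \<inter> R2))"
        by (rule card_mono[rotated]) (simp add: finite_nb)
      also have "\<dots> \<le> card (nb B \<inter> X) + card (nb B \<inter> R2)" by (rule card_Un_le)
      finally show "9 \<le> card (nb B \<inter> X) + card (nb B \<inter> R2)"
        using nine[OF vK BK] B by (auto simp: R3_def)
    qed
    then show ?thesis by (simp add: sum.distrib)
  qed
  have q: "(\<Sum>B\<in>R3. card (nb B \<inter> R2)) \<le> 15 * card R2"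
  proof -
    have "(\<Sum>B\<in>R3. card (nb B \<inter> R2)) = (\<Sum>A\<in>R2. card (nb A \<inter> R3))" by (rule dc[OF R3K R2K])
    also have "\<dots> \<le> (\<Sum>A\<in>R2. 15)"
    proof (rule sum_mono)
      fix A assume "A \<in> R2"
      then have "A \<in> KV" using R2K by blast
      have "card (nb A \<inter> R3) \<le> card (nb A)" by (rule card_mono) (auto simp: finite_nb)
      then show "card (nb A \<inter> R3) \<le> 15" using card_nb[OF \<open>A \<in> KV\<close>] by simp
    qed
    finally show ?thesis by simp
  qed
  have "card R = card R2 + card R3" unfolding R23 by (rule card_Un_disjoint[OF fR2 fR3 disj])
  moreover have "card R2 \<le> 37" using cs p2 c37 by linarith
  moreover have "9 * card R3 \<le> 37 + 14 * card R2" using cs p2 p3 q c37 by linarith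
  ultimately show ?thesis by (simp add: R_def)
qed


lemma interior:
  assumes X: "X \<subseteq> KV" and c37: "cut X \<le> 37" and c38: "38 \<le> card X"
  shows "\<exists>v\<in>X. nb v \<subseteq> X"
proof (rule ccontr)
  assume "\<not> (\<exists>v\<in>X. nb v \<subseteq> X)"
  then have "\<And>A. A \<in> X \<Longrightarrow> 1 \<le> card (nb A - X)"
    using finite_nb by (auto simp: Suc_le_eq card_gt_0_iff)
  then have "(\<Sum>A\<in>X. (1::nat)) \<le> (\<Sum>A\<in>X. card (nb A - X))" by (rule sum_mono)
  then have "card X \<le> cut X" by (simp add: cut_def)
  with c37 c38 show False by simp
qed

lemma lemExp:
  assumes X: "X \<subseteq> KV" and c1: "14 \<le> card X" and c2: "14 \<le> card (KV - X)"
  shows "38 \<le> cut X"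
proof (rule ccontr)
  assume "\<not> 38 \<le> cut X"
  then have c37: "cut X \<le> 37" by simp
  have X': "KV - X \<subseteq> KV" by blast
  have c37': "cut (KV - X) \<le> 37" using c37 cut_sym[OF X] by simp
  have fX: "finite X" using X finite_KV finite_subset by blast
  have "card (X \<union> (KV - X)) = card X + card (KV - X)"
    by (rule card_Un_disjoint) (use fX finite_KV in auto)
  moreover have "X \<union> (KV - X) = KV" using X by blast
  ultimately have tot: "card X + card (KV - X) = 210" using card_V by simp
  show False
  proof (cases "card X \<le> 42")
    case True then show False using lemY[OF X c1] c37 by simp
  next
    case F1: False
    show False
    proof (cases "card (KV - X) \<le> 42")
      case True then show False using lemY[OF X' c2] c37' by simp
    next
      case F2: False
      obtain v where v: "v \<in> X" "nb v \<subseteq> X" using interior[OF X c37] F1 by auto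
      obtain w where w: "w \<in> KV - X" "nb w \<subseteq> KV - X" using interior[OF X' c37'] F2 by auto
      have a: "card (KV - X) \<le> 98" by (rule lemInt[OF X v c37])
      have b: "card (KV - (KV - X)) \<le> 98" by (rule lemInt[OF X' w c37'])
      have "KV - (KV - X) = X" using X by blast
      with a b tot show False by simp
    qed
  qed
qed


lemma cut_small:
  assumes C: "C \<subseteq> KV"
  shows "card C * (16 - card C) \<le> cut C"
proof -
  have fC: "finite C" using C finite_KV finite_subset by blast
  have "(\<Sum>A\<in>C. 16 - card C) \<le> (\<Sum>A\<in>C. card (nb A - C))"
  proof (rule sum_mono)
    fix A assume A: "A \<in> C"
    have AK: "A \<in> KV" using A C by blast
    have "nb A \<inter> C \<subseteq> C - {A}" using not_self[OF AK] by blast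
    then have "card (nb A \<inter> C) \<le> card (C - {A})" by (rule card_mono[rotated]) (simp add: fC)
    also have "\<dots> = card C - 1" using A fC by simp
    finally have "card (nb A \<inter> C) \<le> card C - 1" .
    moreover have "1 \<le> card C" using A fC by (simp add: Suc_le_eq card_gt_0_iff) blast
    ultimately show "16 - card C \<le> card (nb A - C)" using card_nb_split[OF AK, of C] by arith
  qed
  then show ?thesis by (simp add: cut_def)
qed

lemma comp_bound:
  assumes C: "C \<subseteq> KV" and m1: "1 \<le> card C" and c14: "14 \<le> card (KV - C)"
  shows "75 * card C \<le> cut C * (2 * card C + 3)"
    and "2 \<le> card C \<Longrightarrow> 75 * card C < cut C * (2 * card C + 3)"
proof -
  have "75 * card C \<le> cut C * (2 * card C + 3) \<and> (2 \<le> card C \<longrightarrow> 75 * card C < cut C * (2 * card C + 3))"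
  proof (cases "14 \<le> card C")
    case True
    have "38 \<le> cut C" by (rule lemExp[OF C True c14])
    then have "38 * (2 * card C + 3) \<le> cut C * (2 * card C + 3)" by (rule mult_right_mono) simp
    moreover have "75 * card C < 38 * (2 * card C + 3)" by simp
    ultimately have "75 * card C < cut C * (2 * card C + 3)" by (rule less_le_trans[rotated])
    then show ?thesis by simp
  next
    case False
    define m where "m = card C"
    have cs: "m * (16 - m) \<le> cut C" using cut_small[OF C] by (simp add: m_def)
    have mm: "m = 1 \<or> m = 2 \<or> m = 3 \<or> m = 4 \<or> m = 5 \<or> m = 6 \<or> m = 7 \<or> m = 8 \<or> m = 9 \<or> m = 10
      \<or> m = 11 \<or> m = 12 \<or> m = 13" using False m1 by (simp add: m_def) arith
    have B1: "m * (16 - m) * (2 * m + 3) \<le> cut C * (2 * m + 3)" using cs by (rule mult_right_mono) simp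
    have B2: "75 * m \<le> m * (16 - m) * (2 * m + 3)" using mm by auto
    have B3: "2 \<le> m \<Longrightarrow> 75 * m < m * (16 - m) * (2 * m + 3)" using mm by auto
    have A1: "75 * m \<le> cut C * (2 * m + 3)" using le_trans[OF B2 B1] .
    have A2: "2 \<le> m \<Longrightarrow> 75 * m < cut C * (2 * m + 3)" using less_le_trans[OF B3 B1] by blast
    show ?thesis using A1 A2 unfolding m_def by blast
  qed
  then show "75 * card C \<le> cut C * (2 * card C + 3)"
    and "2 \<le> card C \<Longrightarrow> 75 * card C < cut C * (2 * card C + 3)" by auto
qed

lemma gb_eq:
  fixes E m :: real
  assumes m: "0 < m"
  shows "(1 + 3/(2*m))^2 * E - 25 * (3/(2*m))^2 * m - 75/2 = (2*m+3) * (E*(2*m+3) - 75*m) / (4*m^2)"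
  using m by (simp add: field_simps power2_eq_square) algebra?

lemma gb:
  fixes E m :: nat
  assumes m: "1 \<le> m" and h: "75 * m \<le> E * (2 * m + 3)"
  shows "75/2 \<le> (1 + 3/(2*real m))^2 * real E - 25 * (3/(2*real m))^2 * real m"
proof -
  have mp: "0 < real m" using m by simp
  have "0 \<le> real E * (2 * real m + 3) - 75 * real m"
  proof -
    have "real (75 * m) \<le> real (E * (2 * m + 3))" using h by (simp only: of_nat_le_iff)
    then show ?thesis by simp
  qed
  then have "0 \<le> (2*real m+3) * (real E*(2*real m+3) - 75*real m) / (4*(real m)^2)"
    using mp by (intro divide_nonneg_pos mult_nonneg_nonneg) auto
  then show ?thesis using gb_eq[OF mp, of "real E"] by linarith
qed

lemma gb_strict:
  fixes E m :: nat
  assumes m: "1 \<le> m" and h: "75 * m < E * (2 * m + 3)"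
  shows "75/2 < (1 + 3/(2*real m))^2 * real E - 25 * (3/(2*real m))^2 * real m"
proof -
  have mp: "0 < real m" using m by simp
  have "0 < real E * (2 * real m + 3) - 75 * real m"
  proof -
    have "real (75 * m) < real (E * (2 * m + 3))" using h by (simp only: of_nat_less_iff)
    then show ?thesis by simp
  qed
  then have "0 < (2*real m+3) * (real E*(2*real m+3) - 75*real m) / (4*(real m)^2)"
    using mp by (intro divide_pos_pos mult_pos_pos) auto
  then show ?thesis using gb_eq[OF mp, of "real E"] by linarith
qed


lemma reach_cases: "reach_in kneser_adj W x y \<Longrightarrow> x = y \<or> (x \<in> W \<and> y \<in> W)"
  unfolding reach_in_def by (induction rule: rtranclp_induct) auto

lemma reach_sym: assumes "reach_in kneser_adj W x y" shows "reach_in kneser_adj W y x"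
proof -
  have "symp (\<lambda>x y. x \<in> W \<and> y \<in> W \<and> kneser_adj x y)" by (auto simp: symp_def kneser_adj_def)
  then have "symp (reach_in kneser_adj W)" unfolding reach_in_def by (rule symp_rtranclp)
  then show ?thesis using assms by (rule sympD)
qed

lemma reach_trans: "reach_in E W x y \<Longrightarrow> reach_in E W y z \<Longrightarrow> reach_in E W x z"
  unfolding reach_in_def by (rule rtranclp_trans)

lemma reach_step: "x \<in> W \<Longrightarrow> y \<in> W \<Longrightarrow> kneser_adj x y \<Longrightarrow> reach_in kneser_adj W x y"
  unfolding reach_in_def by (rule r_into_rtranclp) simp

lemma reach_refl: "reach_in E W x x" unfolding reach_in_def by simp

definition cp :: "nat set set \<Rightarrow> nat set \<Rightarrow> nat set set" where
  "cp W A = {y \<in> W. reach_in kneser_adj W A y}"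

lemma comps_eq: "components_in kneser_adj W = cp W ` W" by (simp add: components_in_def cp_def)
lemma cp_self: "A \<in> W \<Longrightarrow> A \<in> cp W A" by (simp add: cp_def reach_refl)
lemma cp_sub: "cp W A \<subseteq> W" by (auto simp: cp_def)
lemma cp_eq: assumes "B \<in> cp W A" shows "cp W B = cp W A"
proof -
  have r: "reach_in kneser_adj W A B" using assms by (simp add: cp_def)
  show ?thesis unfolding cp_def using reach_trans[OF r] reach_trans[OF reach_sym[OF r]] by blast
qed
lemma cp_closed: "A \<in> W \<Longrightarrow> B \<in> W \<Longrightarrow> A \<inter> B = {} \<Longrightarrow> B \<in> cp W A"
  by (simp add: cp_def reach_step kneser_adj_def)
lemma cp_disj: assumes "cp W A \<noteq> cp W B" shows "cp W A \<inter> cp W B = {}"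
proof (rule ccontr)
  assume "cp W A \<inter> cp W B \<noteq> {}"
  then obtain y where "y \<in> cp W A" "y \<in> cp W B" by blast
  then have "cp W y = cp W A" "cp W y = cp W B" using cp_eq by blast+
  with assms show False by simp
qed
lemma Union_cp: "\<Union> (cp W ` W) = W" using cp_self cp_sub by blast

lemma wdc:
  fixes f :: "nat set \<Rightarrow> real"
  assumes X: "X \<subseteq> KV" and Y: "Y \<subseteq> KV"
  shows "(\<Sum>A\<in>X. \<Sum>B\<in>nb A \<inter> Y. f B) = (\<Sum>B\<in>Y. f B * real (card (nb B \<inter> X)))"
proof -
  have fX: "finite X" and fY: "finite Y" using X Y finite_KV finite_subset by blast+
  have e1: "(\<Sum>B\<in>nb A \<inter> Y. f B) = (\<Sum>B\<in>Y. if A \<inter> B = {} then f B else 0)" for A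
  proof -
    have "nb A \<inter> Y = {B \<in> Y. A \<inter> B = {}}" using Y by (auto simp: nb_def)
    then show ?thesis by (simp add: sum.inter_filter[OF fY])
  qed
  have e2: "(\<Sum>A\<in>X. if A \<inter> B = {} then f B else 0) = f B * real (card (nb B \<inter> X))" for B
  proof -
    have "nb B \<inter> X = {A \<in> X. A \<inter> B = {}}" using X by (auto simp: nb_def)
    then have "f B * real (card (nb B \<inter> X)) = (\<Sum>A\<in>{A \<in> X. A \<inter> B = {}}. f B)" by simp
    also have "\<dots> = (\<Sum>A\<in>X. if A \<inter> B = {} then f B else 0)" by (rule sum.inter_filter[OF fX])
    finally show ?thesis by simp
  qed
  have "(\<Sum>A\<in>X. \<Sum>B\<in>Y. if A \<inter> B = {} then f B else 0) = (\<Sum>B\<in>Y. \<Sum>A\<in>X. if A \<inter> B = {} then f B else 0)"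
    by (rule sum.swap)
  then show ?thesis unfolding e1 using e2 by simp
qed


lemma main:
  assumes vc: "vertex_cut KV kneser_adj S"
  shows "75/2 * real (num_components kneser_adj (KV - S)) \<le> 25 * real (card S) \<and>
    ((\<exists>C\<in>components_in kneser_adj (KV - S). 2 \<le> card C) \<longrightarrow>
       75/2 * real (num_components kneser_adj (KV - S)) < 25 * real (card S))"
proof -
  define W where "W = KV - S"
  define comps where "comps = cp W ` W"
  have SK: "S \<subseteq> KV" using vc by (simp add: vertex_cut_def)
  have c2: "2 \<le> card comps" using vc by (simp add: vertex_cut_def num_components_def comps_eq W_def comps_def)
  have WK: "W \<subseteq> KV" by (simp add: W_def)
  have fW: "finite W" and fS: "finite S" using WK SK finite_KV finite_subset by blast+
  have KVWS: "KV = W \<union> S" and WSd: "W \<inter> S = {}" using SK by (auto simp: W_def)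
  define a where "a A = 3 / (2 * real (card (cp W A)))" for A
  define x where "x A = (if A \<in> W then a A else -1::real)" for A
  define e where "e A = card (nb A \<inter> S)" for A
  define h where "h A = real (e A) * (1 + a A)^2 - 25 * (a A)^2" for A
  have a_cp: "a B = a A" if "B \<in> cp W A" for A B using cp_eq[OF that] by (simp add: a_def)
  have nbWS: "card (nb A \<inter> W) = 15 - e A" "e A \<le> 15" if "A \<in> KV" for A
  proof -
    have "nb A - W = nb A \<inter> S" using nb_sub KVWS WSd by blast
    then show "card (nb A \<inter> W) = 15 - e A" "e A \<le> 15" using card_nb_split[OF that, of W] by (auto simp: e_def)
  qed
  have P: "0 \<le> (\<Sum>(A,B)\<in>DD. x A * x B) + 10 * (\<Sum>A\<in>KV. (x A)^2)" by (rule P1)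
  have s1: "(\<Sum>(A,B)\<in>DD. x A * x B) = (\<Sum>A\<in>KV. x A * (\<Sum>B\<in>nb A. x B))"
  proof -
    have "(\<Sum>(A,B)\<in>DD. x A * x B) = (\<Sum>A\<in>KV. \<Sum>B\<in>nb A. x A * x B)"
      unfolding DD_Sigma by (rule sum.Sigma[symmetric]) (auto simp: finite_KV finite_nb)
    then show ?thesis by (simp add: sum_distrib_left)
  qed
  have inW: "(\<Sum>B\<in>nb A. x B) = a A * real (15 - e A) - real (e A)" if A: "A \<in> W" for A
  proof -
    have AK: "A \<in> KV" using A WK by blast
    have "nb A = (nb A \<inter> W) \<union> (nb A \<inter> S)" using nb_sub KVWS by blast
    then have "(\<Sum>B\<in>nb A. x B) = (\<Sum>B\<in>(nb A \<inter> W) \<union> (nb A \<inter> S). x B)" by simp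
    also have "\<dots> = (\<Sum>B\<in>nb A \<inter> W. x B) + (\<Sum>B\<in>nb A \<inter> S. x B)"
      by (rule sum.union_disjoint) (use finite_nb WSd in auto)
    also have "(\<Sum>B\<in>nb A \<inter> W. x B) = (\<Sum>B\<in>nb A \<inter> W. a A)"
    proof (rule sum.cong[OF refl])
      fix B assume B: "B \<in> nb A \<inter> W"
      have "B \<in> cp W A" using cp_closed[OF A] B by (auto simp: nb_def)
      then show "x B = a A" using B a_cp by (simp add: x_def)
    qed
    also have "\<dots> = real (15 - e A) * a A" using nbWS[OF AK] by simp
    also have "(\<Sum>B\<in>nb A \<inter> S. x B) = (\<Sum>B\<in>nb A \<inter> S. -1)"
      by (rule sum.cong[OF refl]) (use WSd in \<open>auto simp: x_def\<close>)
    also have "\<dots> = - real (e A)" by (simp add: e_def)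
    finally show ?thesis by simp
  qed
  have inS: "(\<Sum>B\<in>nb A. x B) = (\<Sum>B\<in>nb A \<inter> W. a B) - real (e A)" if A: "A \<in> S" for A
  proof -
    have "nb A = (nb A \<inter> W) \<union> (nb A \<inter> S)" using nb_sub KVWS by blast
    then have "(\<Sum>B\<in>nb A. x B) = (\<Sum>B\<in>(nb A \<inter> W) \<union> (nb A \<inter> S). x B)" by simp
    also have "\<dots> = (\<Sum>B\<in>nb A \<inter> W. x B) + (\<Sum>B\<in>nb A \<inter> S. x B)"
      by (rule sum.union_disjoint) (use finite_nb WSd in auto)
    also have "(\<Sum>B\<in>nb A \<inter> W. x B) = (\<Sum>B\<in>nb A \<inter> W. a B)"
      by (rule sum.cong[OF refl]) (simp add: x_def)
    also have "(\<Sum>B\<in>nb A \<inter> S. x B) = (\<Sum>B\<in>nb A \<inter> S. -1)"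
      by (rule sum.cong[OF refl]) (use WSd in \<open>auto simp: x_def\<close>)
    also have "\<dots> = - real (e A)" by (simp add: e_def)
    finally show ?thesis by simp
  qed
  have sumW: "(\<Sum>A\<in>W. x A * (\<Sum>B\<in>nb A. x B) + 10 * (x A)^2) =
      (\<Sum>A\<in>W. 25 * (a A)^2 - (a A)^2 * real (e A) - a A * real (e A))"
  proof (rule sum.cong[OF refl])
    fix A assume A: "A \<in> W"
    have "e A \<le> 15" using nbWS A WK by blast
    then have r15: "real (15 - e A) = 15 - real (e A)" by (simp add: of_nat_diff)
    have xa: "x A = a A" using A by (simp add: x_def)
    have "x A * (\<Sum>B\<in>nb A. x B) + 10 * (x A)^2 = a A * (a A * (15 - real (e A)) - real (e A)) + 10 * (a A)^2"
      by (simp only: xa inW[OF A] r15)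
    then show "x A * (\<Sum>B\<in>nb A. x B) + 10 * (x A)^2 = 25 * (a A)^2 - (a A)^2 * real (e A) - a A * real (e A)"
      by (simp add: power2_eq_square algebra_simps)
  qed
  have sumS: "(\<Sum>A\<in>S. x A * (\<Sum>B\<in>nb A. x B) + 10 * (x A)^2) =
      (\<Sum>A\<in>S. real (e A) + 10 - (\<Sum>B\<in>nb A \<inter> W. a B))"
  proof (rule sum.cong[OF refl])
    fix A assume A: "A \<in> S"
    then show "x A * (\<Sum>B\<in>nb A. x B) + 10 * (x A)^2 = real (e A) + 10 - (\<Sum>B\<in>nb A \<inter> W. a B)"
      using inS[OF A] WSd by (auto simp: x_def)
  qed
  have w1: "(\<Sum>A\<in>S. \<Sum>B\<in>nb A \<inter> W. a B) = (\<Sum>B\<in>W. a B * real (e B))"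
    using wdc[OF SK WK, of a] by (simp add: e_def)
  have w2: "(\<Sum>A\<in>S. real (e A)) = 15 * real (card S) - (\<Sum>B\<in>W. real (e B))"
  proof -
    have "(\<Sum>A\<in>S. real (e A)) = (\<Sum>A\<in>S. 15 - real (card (nb A \<inter> W)))"
    proof (rule sum.cong[OF refl])
      fix A assume A: "A \<in> S"
      have AK: "A \<in> KV" using A SK by blast
      have "nb A - S = nb A \<inter> W" using nb_sub KVWS WSd by blast
      then show "real (e A) = 15 - real (card (nb A \<inter> W))"
        using card_nb_split[OF AK, of S] by (simp add: e_def)
    qed
    also have "\<dots> = 15 * real (card S) - (\<Sum>A\<in>S. real (card (nb A \<inter> W)))"
      by (simp add: sum_subtractf)
    also have "(\<Sum>A\<in>S. real (card (nb A \<inter> W))) = real (\<Sum>A\<in>S. card (nb A \<inter> W))" by simp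
    also have "(\<Sum>A\<in>S. card (nb A \<inter> W)) = (\<Sum>B\<in>W. card (nb B \<inter> S))" by (rule dc[OF SK WK])
    finally show ?thesis by (simp add: e_def)
  qed
  have Qeq: "(\<Sum>(A,B)\<in>DD. x A * x B) + 10 * (\<Sum>A\<in>KV. (x A)^2) = 25 * real (card S) - (\<Sum>A\<in>W. h A)"
  proof -
    have "(\<Sum>(A,B)\<in>DD. x A * x B) + 10 * (\<Sum>A\<in>KV. (x A)^2) = (\<Sum>A\<in>KV. x A * (\<Sum>B\<in>nb A. x B) + 10 * (x A)^2)"
      by (simp add: s1 sum.distrib sum_distrib_left)
    also have "\<dots> = (\<Sum>A\<in>W. x A * (\<Sum>B\<in>nb A. x B) + 10 * (x A)^2) + (\<Sum>A\<in>S. x A * (\<Sum>B\<in>nb A. x B) + 10 * (x A)^2)"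
      unfolding KVWS by (rule sum.union_disjoint[OF fW fS WSd])
    also have "\<dots> = (\<Sum>A\<in>W. 25 * (a A)^2 - (a A)^2 * real (e A) - a A * real (e A))
       + ((\<Sum>A\<in>S. real (e A)) + 10 * real (card S) - (\<Sum>A\<in>S. \<Sum>B\<in>nb A \<inter> W. a B))"
      unfolding sumW sumS by (simp add: sum.distrib sum_subtractf)
    also have "\<dots> = 25 * real (card S) - (\<Sum>A\<in>W. h A)"
      unfolding w1 w2 h_def by (simp add: sum.distrib sum_subtractf algebra_simps power2_eq_square sum_distrib_left)
    finally show ?thesis .
  qed
  have hle: "(\<Sum>A\<in>W. h A) \<le> 25 * real (card S)" using P Qeq by linarith
  have fcomps: "finite comps" using fW by (simp add: comps_def)
  have hcomp: "(\<Sum>A\<in>W. h A) = (\<Sum>C\<in>comps. \<Sum>A\<in>C. h A)"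
  proof -
    have "(\<Sum>A\<in>\<Union>comps. h A) = (sum (sum h)) comps"
    proof (rule sum.Union_disjoint[THEN trans])
      show "\<forall>A\<in>comps. finite A" using fW cp_sub[of W] by (auto simp: comps_def intro: finite_subset)
      show "\<forall>A\<in>comps. \<forall>B\<in>comps. A \<noteq> B \<longrightarrow> A \<inter> B = {}" using cp_disj by (auto simp: comps_def)
    qed simp
    then show ?thesis using Union_cp[of W] by (simp add: comps_def)
  qed
  have Cbound: "75/2 \<le> (\<Sum>A\<in>C. h A) \<and> (2 \<le> card C \<longrightarrow> 75/2 < (\<Sum>A\<in>C. h A))" if C: "C \<in> comps" for C
  proof -
    obtain A0 where A0: "A0 \<in> W" "C = cp W A0" using C by (auto simp: comps_def)
    have CW: "C \<subseteq> W" using A0 cp_sub by blast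
    have CK: "C \<subseteq> KV" using CW WK by blast
    have fC: "finite C" using CW fW finite_subset by blast
    have "A0 \<in> C" using A0 cp_self by blast
    then have m1: "1 \<le> card C" using fC by (simp add: Suc_le_eq card_gt_0_iff) blast
    have "card (comps - {C}) \<noteq> 0" using c2 C fcomps by (simp add: card_Diff_singleton)
    then have "comps - {C} \<noteq> {}" by (metis card.empty)
    then obtain C' where C': "C' \<in> comps" "C' \<noteq> C" by blast
    obtain A1 where A1: "A1 \<in> W" "C' = cp W A1" using C' by (auto simp: comps_def)
    have A1C': "A1 \<in> C'" using A1 cp_self by blast
    have dCC: "C \<inter> C' = {}" using cp_disj C' A0 A1 by blast
    have A1K: "A1 \<in> KV" using A1 WK by blast
    have sub16: "insert A1 (nb A1) \<subseteq> KV - C"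
    proof
      fix B assume B: "B \<in> insert A1 (nb A1)"
      show "B \<in> KV - C"
      proof (cases "B = A1")
        case True then show ?thesis using A1K A1C' dCC by blast
      next
        case False
        then have Bn: "B \<in> nb A1" using B by blast
        have "B \<notin> C"
        proof
          assume BC: "B \<in> C"
          then have "B \<in> W" using CW by blast
          then have "B \<in> cp W A1" using cp_closed[OF A1(1)] Bn by (simp add: nb_def)
          then show False using BC dCC A1 by blast
        qed
        then show ?thesis using Bn nb_sub by blast
      qed
    qed
    have "card (insert A1 (nb A1)) = 16" using not_self[OF A1K] card_nb[OF A1K] finite_nb by simp
    moreover have "card (insert A1 (nb A1)) \<le> card (KV - C)" by (rule card_mono[OF _ sub16]) (simp add: finite_KV)
    ultimately have c14: "14 \<le> card (KV - C)" by simp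
    have aC: "a A = 3 / (2 * real (card C))" if "A \<in> C" for A
      using cp_eq[of A W A0] that A0 by (simp add: a_def)
    have eC: "e A = card (nb A - C)" if A: "A \<in> C" for A
    proof -
      have "nb A - C = nb A \<inter> S"
      proof
        show "nb A - C \<subseteq> nb A \<inter> S"
        proof
          fix B assume B: "B \<in> nb A - C"
          have "B \<notin> W"
          proof
            assume "B \<in> W"
            then have "B \<in> cp W A" using cp_closed[of A W B] A CW B by (auto simp: nb_def)
            then have "B \<in> C" using cp_eq[of A W A0] A A0 by simp
            with B show False by blast
          qed
          then show "B \<in> nb A \<inter> S" using B nb_sub KVWS by blast
        qed
        show "nb A \<inter> S \<subseteq> nb A - C" using CW WSd by blast
      qed
      then show ?thesis by (simp add: e_def)
    qed
    have sC: "(\<Sum>A\<in>C. h A) = (1 + 3/(2*real (card C)))^2 * real (cut C) - 25 * (3/(2*real (card C)))^2 * real (card C)"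
    proof -
      have "(\<Sum>A\<in>C. h A) = (\<Sum>A\<in>C. real (card (nb A - C)) * (1 + 3/(2*real (card C)))^2 - 25 * (3/(2*real (card C)))^2)"
        by (rule sum.cong[OF refl]) (simp add: h_def aC eC)
      also have "\<dots> = (1 + 3/(2*real (card C)))^2 * real (cut C) - 25 * (3/(2*real (card C)))^2 * real (card C)"
        by (simp add: cut_def sum_subtractf sum_distrib_right mult.commute)
      finally show ?thesis .
    qed
    have b1: "75 * card C \<le> cut C * (2 * card C + 3)" by (rule comp_bound(1)[OF CK m1 c14])
    have b2: "2 \<le> card C \<Longrightarrow> 75 * card C < cut C * (2 * card C + 3)" by (rule comp_bound(2)[OF CK m1 c14])
    show ?thesis using gb[OF m1 b1] gb_strict[OF m1 b2] sC by auto
  qed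
  have lb: "75/2 * real (card comps) \<le> (\<Sum>C\<in>comps. \<Sum>A\<in>C. h A)"
  proof -
    have "(\<Sum>C\<in>comps. 75/2) \<le> (\<Sum>C\<in>comps. \<Sum>A\<in>C. h A)" by (rule sum_mono) (use Cbound in blast)
    then show ?thesis by simp
  qed
  have lbs: "75/2 * real (card comps) < (\<Sum>C\<in>comps. \<Sum>A\<in>C. h A)" if ex: "\<exists>C\<in>comps. 2 \<le> card C"
  proof -
    have "(\<Sum>C\<in>comps. 75/2) < (\<Sum>C\<in>comps. \<Sum>A\<in>C. h A)"
      by (rule sum_strict_mono_ex1[OF fcomps]) (use Cbound ex in blast)+
    then show ?thesis by simp
  qed
  have nc: "num_components kneser_adj (KV - S) = card comps"
    by (simp add: num_components_def comps_eq comps_def W_def)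
  have ce: "components_in kneser_adj (KV - S) = comps" by (simp add: comps_eq comps_def W_def)
  have A: "75/2 * real (card comps) \<le> 25 * real (card S)" using lb hle hcomp by linarith
  have B: "(\<exists>C\<in>comps. 2 \<le> card C) \<longrightarrow> 75/2 * real (card comps) < 25 * real (card S)"
  proof
    assume ex: "\<exists>C\<in>comps. 2 \<le> card C"
    show "75/2 * real (card comps) < 25 * real (card S)" using lbs[OF ex] hle hcomp by linarith
  qed
  show ?thesis unfolding nc ce using A B by blast
qed


lemma indep_nc:
  assumes J: "J \<subseteq> KV" and ind: "\<forall>x\<in>J. \<forall>y\<in>J. \<not> kneser_adj x y"
  shows "num_components kneser_adj J = card J"
proof -
  have r: "reach_in kneser_adj J x y \<Longrightarrow> x = y" for x y
    unfolding reach_in_def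
  proof (induction rule: rtranclp_induct)
    case base then show ?case by simp
  next
    case (step y z) then show ?case using ind by blast
  qed
  have "cp J x = {x}" if "x \<in> J" for x using that r cp_self[OF that] by (auto simp: cp_def)
  then have "components_in kneser_adj J = (\<lambda>x. {x}) ` J" by (simp add: comps_eq)
  moreover have "inj_on (\<lambda>x. {x}) J" by (simp add: inj_on_def)
  ultimately show ?thesis by (simp add: num_components_def card_image)
qed

definition St :: "nat set set" where "St = {A \<in> KV. 1 \<in> A}"

lemma St_indep: "\<forall>x\<in>St. \<forall>y\<in>St. \<not> kneser_adj x y"
  by (auto simp: St_def kneser_adj_def)

lemma card_St: "card St = 84"
proof -
  define T where "T = {B. B \<subseteq> {2..10::nat} \<and> card B = 3}"
  have eq: "St = insert 1 ` T"
  proof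
    show "St \<subseteq> insert 1 ` T"
    proof
      fix A assume A: "A \<in> St"
      then have A1: "1 \<in> A" "A \<subseteq> {1..10}" "card A = 4" by (auto simp: St_def KV_iff)
      have fA: "finite A" using A1 finite_subset by blast
      have "A - {1} \<in> T" using A1 fA by (auto simp: T_def)
      moreover have "A = insert 1 (A - {1})" using A1 by blast
      ultimately show "A \<in> insert 1 ` T" by blast
    qed
    show "insert 1 ` T \<subseteq> St"
    proof
      fix A assume "A \<in> insert 1 ` T"
      then obtain B where B: "B \<in> T" "A = insert 1 B" by blast
      have B1: "B \<subseteq> {2..10}" "card B = 3" using B by (auto simp: T_def)
      have fB: "finite B" using B1 finite_subset by blast
      have "1 \<notin> B" using B1 by auto
      then have "card A = 4" using B fB B1 by simp
      moreover have "A \<subseteq> {1..10}" using B B1 by auto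
      ultimately show "A \<in> St" using B by (simp add: St_def KV_iff)
    qed
  qed
  have inj: "inj_on (insert (1::nat)) T"
  proof (rule inj_onI)
    fix B B' assume "B \<in> T" "B' \<in> T" "insert (1::nat) B = insert 1 B'"
    moreover have "1 \<notin> B" "1 \<notin> B'" using \<open>B \<in> T\<close> \<open>B' \<in> T\<close> by (auto simp: T_def)
    ultimately show "B = B'" by (metis insert_ident)
  qed
  have "card T = card {2..10::nat} choose 3" unfolding T_def by (rule n_subsets) simp
  also have "\<dots> = 84" by code_simp
  finally show ?thesis using eq card_image[OF inj] by simp
qed

lemma lowb:
  assumes vc: "vertex_cut KV kneser_adj S"
  shows "3/2 \<le> real (card S) / real (num_components kneser_adj (KV - S))"
proof -
  have c2: "2 \<le> num_components kneser_adj (KV - S)" using vc by (simp add: vertex_cut_def)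
  have "75/2 * real (num_components kneser_adj (KV - S)) \<le> 25 * real (card S)" using main[OF vc] by blast
  then show ?thesis using c2 by (simp add: le_divide_eq)
qed

lemma cutJ:
  assumes J: "J \<subseteq> KV" and ind: "\<forall>x\<in>J. \<forall>y\<in>J. \<not> kneser_adj x y" and c2: "2 \<le> card J"
  shows "vertex_cut KV kneser_adj (KV - J)" "num_components kneser_adj (KV - (KV - J)) = card J"
proof -
  have e: "KV - (KV - J) = J" using J by blast
  show "num_components kneser_adj (KV - (KV - J)) = card J" unfolding e by (rule indep_nc[OF J ind])
  then show "vertex_cut KV kneser_adj (KV - J)" using c2 by (simp add: vertex_cut_def)
qed

lemma indep_le84:
  assumes J: "J \<subseteq> KV" and ind: "\<forall>x\<in>J. \<forall>y\<in>J. \<not> kneser_adj x y"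
  shows "card J \<le> 84"
proof (cases "2 \<le> card J")
  case False then show ?thesis by simp
next
  case True
  have vc: "vertex_cut KV kneser_adj (KV - J)" and nc: "num_components kneser_adj (KV - (KV - J)) = card J"
    using cutJ[OF J ind True] by blast+
  have "75/2 * real (card J) \<le> 25 * real (card (KV - J))" using main[OF vc] nc by simp
  moreover have "card (KV - J) = 210 - card J" using J card_V finite_KV by (simp add: card_Diff_subset finite_subset)
  moreover have "card J \<le> 210" using J card_V finite_KV card_mono by metis
  ultimately show ?thesis by (simp add: of_nat_diff)
qed

theorem final:
  shows "toughness (kneser_vertices 10 4) kneser_adj = 3 / 2 \<and>
    (\<forall>S. vertex_cut (kneser_vertices 10 4) kneser_adj S \<and>
         real (card S) / real (num_components kneser_adj (kneser_vertices 10 4 - S)) = 3 / 2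
       \<longrightarrow> (\<exists>I. maximum_independent_set (kneser_vertices 10 4) kneser_adj I \<and>
                S = kneser_vertices 10 4 - I))"
proof
  have StK: "St \<subseteq> KV" by (auto simp: St_def)
  have vc0: "vertex_cut KV kneser_adj (KV - St)" and nc0: "num_components kneser_adj (KV - (KV - St)) = 84"
    using cutJ[OF StK St_indep] card_St by auto
  have cS0: "card (KV - St) = 126" using StK card_V card_St finite_KV by (simp add: card_Diff_subset finite_subset)
  define R where "R = {real (card S) / real (num_components kneser_adj (KV - S)) | S. vertex_cut KV kneser_adj S}"
  have fR: "finite R"
  proof -
    have "R = (\<lambda>S. real (card S) / real (num_components kneser_adj (KV - S))) ` {S. vertex_cut KV kneser_adj S}"
      by (auto simp: R_def)
    moreover have "finite {S. vertex_cut KV kneser_adj S}"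
      by (rule finite_subset[of _ "Pow KV"]) (auto simp: vertex_cut_def finite_KV)
    ultimately show ?thesis by simp
  qed
  have inR: "3/2 \<in> R" unfolding R_def using vc0 nc0 cS0 by force
  have lbR: "\<forall>r\<in>R. 3/2 \<le> r" using lowb by (auto simp: R_def)
  show "toughness KV kneser_adj = 3 / 2"
    unfolding toughness_def R_def[symmetric] by (rule Min_eqI[OF fR]) (use lbR inR in auto)
next
  show "\<forall>S. vertex_cut KV kneser_adj S \<and>
         real (card S) / real (num_components kneser_adj (KV - S)) = 3 / 2
       \<longrightarrow> (\<exists>I. maximum_independent_set KV kneser_adj I \<and> S = KV - I)"
  proof (intro allI impI)
    fix S assume h: "vertex_cut KV kneser_adj S \<and> real (card S) / real (num_components kneser_adj (KV - S)) = 3 / 2"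
    have vc: "vertex_cut KV kneser_adj S" using h by blast
    have SK: "S \<subseteq> KV" using vc by (simp add: vertex_cut_def)
    define W where "W = KV - S"
    have c2: "2 \<le> num_components kneser_adj W" using vc by (simp add: vertex_cut_def W_def)
    have eq: "25 * real (card S) = 75/2 * real (num_components kneser_adj W)"
      using h c2 by (simp add: W_def divide_eq_eq)
    have no2: "\<not> (\<exists>C\<in>components_in kneser_adj W. 2 \<le> card C)" using main[OF vc] eq by (auto simp: W_def)
    have WK: "W \<subseteq> KV" by (simp add: W_def)
    have fW: "finite W" using WK finite_KV finite_subset by blast
    have ind: "\<forall>x\<in>W. \<forall>y\<in>W. \<not> kneser_adj x y"
    proof (intro ballI notI)
      fix A B assume A: "A \<in> W" and B: "B \<in> W" and adj: "kneser_adj A B"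
      have "B \<in> cp W A" using cp_closed[OF A B] adj by (simp add: kneser_adj_def)
      moreover have "A \<in> cp W A" using cp_self[OF A] .
      moreover have "cp W A \<in> components_in kneser_adj W" using A by (simp add: comps_eq)
      moreover have "finite (cp W A)" using cp_sub[of W A] fW finite_subset by blast
      ultimately have "A = B" using no2
        by (metis (no_types, lifting) card_1_singletonE card_le_Suc0_iff_eq not_less_eq_eq numeral_2_eq_2)
      then show False using adj KV_ne A WK by (auto simp: kneser_adj_def)
    qed
    have ncW: "num_components kneser_adj W = card W" by (rule indep_nc[OF WK ind])
    have cS: "card S \<le> 210" using SK card_V finite_KV card_mono by metis
    have cSW: "card S = 210 - card W" using SK card_V finite_KV cS
      by (simp add: W_def card_Diff_subset finite_subset)
    have "card W \<le> 210" using WK card_V finite_KV card_mono by metis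
    then have cW: "card W = 84" using eq ncW cSW by (simp add: of_nat_diff)
    have mis: "maximum_independent_set KV kneser_adj W"
      unfolding maximum_independent_set_def independent_set_def
      using WK ind indep_le84 cW by auto
    moreover have "S = KV - W" using SK by (auto simp: W_def)
    ultimately show "\<exists>I. maximum_independent_set KV kneser_adj I \<and> S = KV - I" by blast
  qed
qed


theorem theorem5p4:
  shows "toughness (kneser_vertices 10 4) kneser_adj = 3 / 2 \<and>
    (\<forall>S. vertex_cut (kneser_vertices 10 4) kneser_adj S \<and>
         real (card S) / real (num_components kneser_adj (kneser_vertices 10 4 - S)) = 3 / 2
       \<longrightarrow> (\<exists>I. maximum_independent_set (kneser_vertices 10 4) kneser_adj I \<and>
                S = kneser_vertices 10 4 - I))"
  by (rule final)

end
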